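(* Let $a\ge2$, $d\ge1$ and $s$ be integers with $\gcd(a,d)=1$ and $1\le s<a$, and write $c=\lceil (a-1)/s\rceil$. Let $\mathit{NR}$ be the set of positive integers not representable as $\sum_{i=0}^s(a+id)x_i$ with $x_0,\dots,x_s$ nonnegative integers, and let $S_m=\sum_{n\in\mathit{NR}}n^m$. Then \[ 2S_0=-sc^2+(2a-2+s)c+(a-1)(d-1), \] \[ 12S_1=-2s(2a+ds)c^3+\bigl(6a^2+3(2a+ds)(s-1)\bigr)c^2+\bigl(6(d-1)a(a-1)+(3d-2a-ds)s\bigr)c+(a-1)(d-1)(2ad-a-d-1), \] \[ \begin{aligned} 12S_2={}&-s\bigl((a+sd)(2a+sd)+a^2\bigr)c^4+\bigl(4a^3+2(3s-2)a^2+2sd(3s-2)a+2s^2d^2(s-1)\bigr)c^3\\ &+\bigl(6(d-1)a^3+3(2-s-2d)a^2-3sd(s-2)a-sd^2(s^2-3s+1)\bigr)c^2\\ &+\bigl(2(2d-1)(d-1)a^3-(6d^2-6d+2)a^2+2d(d-s)a+s(1-s)d^2\bigr)c+ad(a-1)(d-1)(ad-a-d). \end{aligned} \]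
   Context: $\lceil x\rceil$ is the least integer not less than $x$. *)

theory Defs
  imports Complex_Main
begin

definition NR :: "int \<Rightarrow> int \<Rightarrow> int \<Rightarrow> int set" where
  "NR a d s = {n. n > 0 \<and>
     \<not> (\<exists>x :: nat \<Rightarrow> int. (\<forall>i. 0 \<le> x i) \<and>
           n = (\<Sum>i = 0..nat s. (a + int i * d) * x i))}"

definition Spow :: "int \<Rightarrow> int \<Rightarrow> int \<Rightarrow> nat \<Rightarrow> int" where
  "Spow a d s m = (\<Sum>n \<in> NR a d s. n ^ m)"

end

theory Submission
  imports Defs
begin


definition Kc :: "int \<Rightarrow> int \<Rightarrow> int" where "Kc s j = (j + s - 1) div s"

lemma Kc_bounds:
  assumes "s > 0" shows "s * (Kc s j - 1) < j \<and> j \<le> s * Kc s j"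
proof -
  have e: "j + s - 1 = s * Kc s j + (j + s - 1) mod s" unfolding Kc_def by simp
  have "0 \<le> (j + s - 1) mod s" "(j + s - 1) mod s < s" using assms by auto
  then show ?thesis using e by (simp add: algebra_simps)
qed

lemma Kc_unique:
  assumes "s > 0" "s * (c - 1) < j" "j \<le> s * c" shows "Kc s j = c"
proof -
  from Kc_bounds[OF assms(1), of j] have b: "s * (Kc s j - 1) < j" "j \<le> s * Kc s j" by auto
  have "s * (c - 1) < s * Kc s j" using assms b by linarith
  then have "c - 1 < Kc s j" using assms(1) by (simp add: mult_less_cancel_left_pos)
  moreover have "s * (Kc s j - 1) < s * c" using assms b by linarith
  then have "Kc s j - 1 < c" using assms(1) by (simp add: mult_less_cancel_left_pos)
  ultimately show ?thesis by linarith
qed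

lemma sum_K_nat:
  fixes h :: "int \<Rightarrow> int \<Rightarrow> int" and Q :: "int \<Rightarrow> int \<Rightarrow> int"
  assumes s: "s > 0" and base: "h 0 0 = Q 0 0"
    and st1: "\<And>N c. Q (N+1) c = Q N c + h c (N+1)"
    and st2: "\<And>c. Q (s*c+1) (c+1) = Q (s*c) c + h (c+1) (s*c+1)"
  shows "\<forall>c. s*(c-1) < int n \<longrightarrow> int n \<le> s*c \<longrightarrow> (\<Sum>j\<in>{0..int n}. h (Kc s j) j) = Q (int n) c"
proof (induction n)
  case 0
  show ?case
  proof (intro allI impI)
    fix c assume "s*(c-1) < int 0" "int 0 \<le> s*c"
    then have "Kc s 0 = c" using Kc_unique[OF s, of c 0] by simp
    moreover have "Kc s 0 = 0" using Kc_unique[OF s, of 0 0] s by simp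
    ultimately have "c = 0" by simp
    moreover have "Kc s 0 = 0" using Kc_unique[OF s, of 0 0] s by simp
    ultimately show "(\<Sum>j\<in>{0..int 0}. h (Kc s j) j) = Q (int 0) c" using base by simp
  qed
next
  case (Suc n)
  show ?case
  proof (intro allI impI)
    fix c assume c1: "s*(c-1) < int (Suc n)" and c2: "int (Suc n) \<le> s*c"
    have K: "Kc s (int n + 1) = c" using Kc_unique[OF s c1 c2] by (simp add: add.commute)
    have set: "{0..int (Suc n)} = insert (int n + 1) {0..int n}" by auto
    have S: "(\<Sum>j\<in>{0..int (Suc n)}. h (Kc s j) j) = (\<Sum>j\<in>{0..int n}. h (Kc s j) j) + h c (int n + 1)"
      unfolding set using K by simp
    show "(\<Sum>j\<in>{0..int (Suc n)}. h (Kc s j) j) = Q (int (Suc n)) c"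
    proof (cases "s*(c-1) < int n")
      case True
      have "int n \<le> s * c" using c2 by simp
      then have "(\<Sum>j\<in>{0..int n}. h (Kc s j) j) = Q (int n) c" using Suc.IH True by blast
      then show ?thesis using S st1[of "int n" c] by (simp add: add.commute)
    next
      case False
      then have nv: "int n = s*(c-1)" using c1 by simp
      have "s*(c-1-1) < int n" using nv s by (simp add: algebra_simps)
      then have "(\<Sum>j\<in>{0..int n}. h (Kc s j) j) = Q (int n) (c-1)" using Suc.IH nv by auto
      then show ?thesis using S st2[of "c-1"] nv by (simp add: add.commute)
    qed
  qed
qed

lemma sum_K:
  fixes h :: "int \<Rightarrow> int \<Rightarrow> int" and Q :: "int \<Rightarrow> int \<Rightarrow> int"
  assumes s: "s > 0" and base: "h 0 0 = Q 0 0"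
    and st1: "\<And>N c. Q (N+1) c = Q N c + h c (N+1)"
    and st2: "\<And>c. Q (s*c+1) (c+1) = Q (s*c) c + h (c+1) (s*c+1)"
    and N: "0 \<le> N" "s*(c-1) < N" "N \<le> s*c"
  shows "(\<Sum>j\<in>{0..N}. h (Kc s j) j) = Q N c"
  using sum_K_nat[OF s base st1 st2, of "nat N"] N by auto

lemma sum_R_nat:
  fixes g Q :: "int \<Rightarrow> int"
  assumes "Q 0 = 0" "\<And>N. Q (N+1) = Q N + g N"
  shows "(\<Sum>x\<in>{0..<int n}. g x) = Q (int n)"
proof (induction n)
  case 0 then show ?case using assms by simp
next
  case (Suc n)
  have "{0..<int (Suc n)} = insert (int n) {0..<int n}" by auto
  then show ?case using Suc assms(2)[of "int n"] by (simp add: add.commute)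
qed

lemma sum_R:
  fixes g Q :: "int \<Rightarrow> int"
  assumes "Q 0 = 0" "\<And>N. Q (N+1) = Q N + g N" "0 \<le> N"
  shows "(\<Sum>x\<in>{0..<N}. g x) = Q N"
  using sum_R_nat[OF assms(1,2), of "nat N"] assms(3) by simp

definition W0 :: "int \<Rightarrow> int \<Rightarrow> int \<Rightarrow> int \<Rightarrow> int \<Rightarrow> int" where
 "W0 a d s N c = d * N + d * N^2 + 2 * a * N * c + a * s * c - a * s * c^2"
definition W1 :: "int \<Rightarrow> int \<Rightarrow> int \<Rightarrow> int \<Rightarrow> int \<Rightarrow> int" where
 "W1 a d s N c = d^2 * N + 3 * d^2 * N^2 + 2 * d^2 * N^3 - 3 * a * d * N + 6 * a * d * N * c - 3 * a * d * N^2 + 6 * a * d * N^2 * c + 3 * a * d * s * c - 3 * a * d * s * c^2 - a * d * s^2 * c + 3 * a * d * s^2 * c^2 - 2 * a * d * s^2 * c^3 - 6 * a^2 * N * c + 6 * a^2 * N * c^2 - 2 * a^2 * s * c + 6 * a^2 * s * c^2 - 4 * a^2 * s * c^3"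
definition W2 :: "int \<Rightarrow> int \<Rightarrow> int \<Rightarrow> int \<Rightarrow> int \<Rightarrow> int" where
 "W2 a d s N c = d^3 * N^2 + 2 * d^3 * N^3 + d^3 * N^4 - a * d^2 * N + 2 * a * d^2 * N * c - 3 * a * d^2 * N^2 + 6 * a * d^2 * N^2 * c - 2 * a * d^2 * N^3 + 4 * a * d^2 * N^3 * c + a * d^2 * s * c - a * d^2 * s * c^2 - a * d^2 * s^2 * c + 3 * a * d^2 * s^2 * c^2 - 2 * a * d^2 * s^2 * c^3 - a * d^2 * s^3 * c^2 + 2 * a * d^2 * s^3 * c^3 - a * d^2 * s^3 * c^4 + a^2 * d * N - 6 * a^2 * d * N * c + 6 * a^2 * d * N * c^2 + a^2 * d * N^2 - 6 * a^2 * d * N^2 * c + 6 * a^2 * d * N^2 * c^2 - 2 * a^2 * d * s * c + 6 * a^2 * d * s * c^2 - 4 * a^2 * d * s * c^3 - 3 * a^2 * d * s^2 * c^2 + 6 * a^2 * d * s^2 * c^3 - 3 * a^2 * d * s^2 * c^4 + 2 * a^3 * N * c - 6 * a^3 * N * c^2 + 4 * a^3 * N * c^3 - 3 * a^3 * s * c^2 + 6 * a^3 * s * c^3 - 3 * a^3 * s * c^4"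
definition R0 :: "int \<Rightarrow> int \<Rightarrow> int" where "R0 a N = - N + N^2"
definition R1 :: "int \<Rightarrow> int \<Rightarrow> int" where "R1 a N = N - 3 * N^2 + 2 * N^3 + 3 * a * N - 3 * a * N^2"
definition R2 :: "int \<Rightarrow> int \<Rightarrow> int" where "R2 a N = N^2 - 2 * N^3 + N^4 - a * N + 3 * a * N^2 - 2 * a * N^3 - a^2 * N + a^2 * N^2"

definition f1 :: "int \<Rightarrow> int \<Rightarrow> int" where "f1 a x = x * (x - a)"
definition f2 :: "int \<Rightarrow> int \<Rightarrow> int" where "f2 a x = x * (x - a) * (2*x - a)"

lemma sumW0: assumes "s > 0" "0 \<le> N" "s*(c-1) < N" "N \<le> s*c"
  shows "2 * (\<Sum>j\<in>{0..N}. Kc s j * a + j * d) = W0 a d s N c"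
proof -
  have "(\<Sum>j\<in>{0..N}. (\<lambda>k j. 2 * (k * a + j * d)) (Kc s j) j) = W0 a d s N c"
    by (rule sum_K[OF assms(1) _ _ _ assms(2-4)]) (simp_all add: W0_def algebra_simps power2_eq_square)
  then show ?thesis by (simp add: sum_distrib_left)
qed

lemma sumW1: assumes "s > 0" "0 \<le> N" "s*(c-1) < N" "N \<le> s*c"
  shows "6 * (\<Sum>j\<in>{0..N}. f1 a (Kc s j * a + j * d)) = W1 a d s N c"
proof -
  have "(\<Sum>j\<in>{0..N}. (\<lambda>k j. 6 * f1 a (k * a + j * d)) (Kc s j) j) = W1 a d s N c"
    by (rule sum_K[OF assms(1) _ _ _ assms(2-4)]) (simp_all add: W1_def f1_def algebra_simps power2_eq_square power3_eq_cube)
  then show ?thesis by (simp add: sum_distrib_left)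
qed

lemma sumW2: assumes "s > 0" "0 \<le> N" "s*(c-1) < N" "N \<le> s*c"
  shows "2 * (\<Sum>j\<in>{0..N}. f2 a (Kc s j * a + j * d)) = W2 a d s N c"
proof -
  have "(\<Sum>j\<in>{0..N}. (\<lambda>k j. 2 * f2 a (k * a + j * d)) (Kc s j) j) = W2 a d s N c"
    by (rule sum_K[OF assms(1) _ _ _ assms(2-4)]) (simp_all add: W2_def f2_def algebra_simps power2_eq_square power3_eq_cube power4_eq_xxxx)
  then show ?thesis by (simp add: sum_distrib_left)
qed

lemma sumR0: "0 \<le> N \<Longrightarrow> 2 * (\<Sum>x\<in>{0..<N}. x) = R0 a N"
  using sum_R[of "R0 a" "\<lambda>x. 2 * x" N] by (simp add: R0_def algebra_simps power2_eq_square sum_distrib_left)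
lemma sumR1: "0 \<le> N \<Longrightarrow> 6 * (\<Sum>x\<in>{0..<N}. f1 a x) = R1 a N"
  using sum_R[of "R1 a" "\<lambda>x. 6 * f1 a x" N] by (simp add: R1_def f1_def algebra_simps power2_eq_square power3_eq_cube sum_distrib_left)
lemma sumR2: "0 \<le> N \<Longrightarrow> 2 * (\<Sum>x\<in>{0..<N}. f2 a x) = R2 a N"
  using sum_R[of "R2 a" "\<lambda>x. 2 * f2 a x" N] by (simp add: R2_def f2_def algebra_simps power2_eq_square power3_eq_cube power4_eq_xxxx sum_distrib_left)



lemma sum_mult_delta:
  assumes "finite A" "t \<in> A"
  shows "(\<Sum>i\<in>A. f i * (if i = t then v else 0)) = f t * (v::int)"
proof -
  have e: "(\<lambda>i. f i * (if i = t then v else 0)) = (\<lambda>i. if i = t then f t * v else 0)" by auto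
  show ?thesis unfolding e using assms by simp
qed

lemma rep_iff:
  fixes a d s n :: int
  assumes s: "1 \<le> s"
  shows "(\<exists>x::nat\<Rightarrow>int. (\<forall>i. 0 \<le> x i) \<and> n = (\<Sum>i = 0..nat s. (a + int i * d) * x i))
     \<longleftrightarrow> (\<exists>k j. 0 \<le> j \<and> j \<le> k*s \<and> n = k*a + j*d)"
proof
  assume "\<exists>x::nat\<Rightarrow>int. (\<forall>i. 0 \<le> x i) \<and> n = (\<Sum>i = 0..nat s. (a + int i * d) * x i)"
  then obtain x :: "nat \<Rightarrow> int" where x0: "\<forall>i. 0 \<le> x i" and n: "n = (\<Sum>i = 0..nat s. (a + int i * d) * x i)" by blast
  define k where "k = (\<Sum>i = 0..nat s. x i)"
  define j where "j = (\<Sum>i = 0..nat s. int i * x i)"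
  have "n = k*a + j*d" unfolding n k_def j_def
    by (simp add: algebra_simps sum.distrib sum_distrib_left sum_distrib_right)
  moreover have "0 \<le> j" unfolding j_def using x0 by (simp add: sum_nonneg)
  moreover have "j \<le> k*s"
  proof -
    have "j \<le> (\<Sum>i = 0..nat s. s * x i)" unfolding j_def
    proof (rule sum_mono)
      fix i assume "i \<in> {0..nat s}"
      then have "int i \<le> s" using s by auto
      then show "int i * x i \<le> s * x i" using x0 by (simp add: mult_right_mono)
    qed
    also have "\<dots> = k * s" unfolding k_def by (simp add: sum_distrib_left mult.commute)
    finally show ?thesis .
  qed
  ultimately show "\<exists>k j. 0 \<le> j \<and> j \<le> k*s \<and> n = k*a + j*d" by blast
next
  assume "\<exists>k j. 0 \<le> j \<and> j \<le> k*s \<and> n = k*a + j*d"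
  then obtain k j where j0: "0 \<le> j" and jk: "j \<le> k*s" and n: "n = k*a + j*d" by blast
  define q where "q = j div s"
  define r where "r = j mod s"
  have jqr: "j = s*q + r" unfolding q_def r_def by simp
  have r0: "0 \<le> r" "r < s" unfolding r_def using s by auto
  have q0: "0 \<le> q" unfolding q_def using s j0 by (simp add: pos_imp_zdiv_nonneg_iff)
  define x :: "nat \<Rightarrow> int" where "x i = (if i = nat s then q else 0) + (if i = nat r then 1 else 0) + (if i = 0 then k - q - 1 else 0)" for i
  have ns: "nat s \<noteq> nat r" "nat s \<noteq> 0" using r0 s by auto
  have "\<forall>i. 0 \<le> x i"
  proof
    fix i
    show "0 \<le> x i"
    proof (cases "i = 0")
      case True
      show ?thesis
      proof (cases "r = 0")
        case True
        then have "s*q \<le> s*k" using jqr jk by (simp add: mult.commute)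
        then have "q \<le> k" using s by simp
        then show ?thesis using True \<open>i = 0\<close> ns unfolding x_def by auto
      next
        case False
        then have "s*q < j" using jqr r0 by linarith
        moreover have "k*s = s*k" by simp
        ultimately have "s*q < s*k" using jk by linarith
        then have "q < k" using s by simp
        then show ?thesis using False \<open>i = 0\<close> ns r0 unfolding x_def by auto
      qed
    next
      case False
      then show ?thesis using q0 unfolding x_def by auto
    qed
  qed
  moreover have "n = (\<Sum>i = 0..nat s. (a + int i * d) * x i)"
  proof -
    have "(\<Sum>i = 0..nat s. (a + int i * d) * x i) =
        (\<Sum>i = 0..nat s. (a + int i * d) * (if i = nat s then q else 0))
      + (\<Sum>i = 0..nat s. (a + int i * d) * (if i = nat r then 1 else 0))
      + (\<Sum>i = 0..nat s. (a + int i * d) * (if i = 0 then k - q - 1 else 0))"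
      unfolding x_def by (simp only: distrib_left sum.distrib)
    also have "\<dots> = (a + int (nat s) * d) * q + (a + int (nat r) * d) * 1 + (a + int 0 * d) * (k - q - 1)"
    proof -
      have "(\<Sum>i = 0..nat s. (a + int i * d) * (if i = nat s then q else 0)) = (a + int (nat s) * d) * q"
        by (rule sum_mult_delta) auto
      moreover have "(\<Sum>i = 0..nat s. (a + int i * d) * (if i = nat r then 1 else 0)) = (a + int (nat r) * d) * 1"
        by (rule sum_mult_delta) (use r0 s in auto)
      moreover have "(\<Sum>i = 0..nat s. (a + int i * d) * (if i = 0 then k - q - 1 else 0)) = (a + int 0 * d) * (k - q - 1)"
        by (rule sum_mult_delta) auto
      ultimately show ?thesis by simp
    qed
    also have "\<dots> = (a + s*d) * q + (a + r*d) + a * (k - q - 1)" using r0 s by simp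
    also have "\<dots> = n" unfolding n using jqr by (simp add: algebra_simps)
    finally show ?thesis by simp
  qed
  ultimately show "\<exists>x::nat\<Rightarrow>int. (\<forall>i. 0 \<le> x i) \<and> n = (\<Sum>i = 0..nat s. (a + int i * d) * x i)" by blast
qed

definition ww :: "int \<Rightarrow> int \<Rightarrow> int \<Rightarrow> int \<Rightarrow> int" where "ww a d s j = Kc s j * a + j * d"

lemma dvd_cancel_coprime:
  fixes a d i j :: int
  assumes "gcd a d = 1" "(i*d) mod a = (j*d) mod a"
  shows "a dvd (i - j)"
proof -
  have "a dvd (i*d - j*d)" using assms(2) by (simp add: mod_eq_dvd_iff)
  then have "a dvd (i - j) * d" by (simp add: algebra_simps)
  moreover have "coprime a d" using assms(1) by (simp add: coprime_iff_gcd_eq_1)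
  ultimately show ?thesis using coprime_dvd_mult_left_iff by blast
qed

lemma char:
  fixes a d s n j0 :: int
  assumes a: "a > 0" and s: "1 \<le> s" and g: "gcd a d = 1" and dd: "d \<ge> 1"
    and j0: "0 \<le> j0" "j0 < a" and nm: "n mod a = (j0*d) mod a"
  shows "(\<exists>k j. 0 \<le> j \<and> j \<le> k*s \<and> n = k*a + j*d) \<longleftrightarrow> ww a d s j0 \<le> n"
proof
  assume "\<exists>k j. 0 \<le> j \<and> j \<le> k*s \<and> n = k*a + j*d"
  then obtain k j where j: "0 \<le> j" "j \<le> k*s" and n: "n = k*a + j*d" by blast
  have "n mod a = (j*d) mod a" unfolding n by simp
  then have "a dvd (j - j0)" using dvd_cancel_coprime[OF g, of j j0] nm by simp
  then obtain t where t: "j - j0 = a * t" by (auto elim: dvdE)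
  have "a * (-1) < a * t" using t j j0 by simp
  then have "-1 < t" using a by (simp only: mult_less_cancel_left_pos)
  then have t0: "0 \<le> t" by simp
  have Kb: "s * (Kc s j0 - 1) < j0" using Kc_bounds[of s j0] s by simp
  have "0 \<le> a * t" using t0 a by simp
  then have "j0 \<le> j" using t by linarith
  then have "s * (Kc s j0 - 1) < s * k" using Kb j by (simp add: mult.commute)
  then have "Kc s j0 - 1 < k" using s by simp
  then have kk: "0 \<le> k - Kc s j0" by simp
  have "n - ww a d s j0 = (k - Kc s j0) * a + t * a * d"
    unfolding n ww_def using t by (simp add: algebra_simps)
  moreover have "0 \<le> (k - Kc s j0) * a" using kk a by simp
  moreover have "0 \<le> t * a * d" using t0 a dd by simp
  ultimately show "ww a d s j0 \<le> n" by linarith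
next
  assume le: "ww a d s j0 \<le> n"
  have "ww a d s j0 mod a = (j0 * d) mod a" unfolding ww_def by simp
  then have "n mod a = ww a d s j0 mod a" using nm by simp
  then have "a dvd (n - ww a d s j0)" by (simp add: mod_eq_dvd_iff)
  then obtain t where t: "n - ww a d s j0 = a * t" by (auto elim: dvdE)
  have "0 \<le> a * t" using t le by simp
  then have t0: "0 \<le> t" using a by (simp add: zero_le_mult_iff)
  have "j0 \<le> s * Kc s j0" using Kc_bounds[of s j0] s by simp
  also have "\<dots> \<le> s * (Kc s j0 + t)" using s t0 by simp
  finally have "j0 \<le> (Kc s j0 + t) * s" by (simp add: mult.commute)
  moreover have "n = (Kc s j0 + t) * a + j0 * d" using t unfolding ww_def by (simp add: algebra_simps)
  ultimately show "\<exists>k j. 0 \<le> j \<and> j \<le> k*s \<and> n = k*a + j*d" using j0 by blast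
qed

lemma bij_mod:
  fixes a d :: int
  assumes a: "a > 0" and g: "gcd a d = 1"
  shows "bij_betw (\<lambda>j. (j*d) mod a) {0..<a} {0..<a}"
proof -
  have inj: "inj_on (\<lambda>j. (j*d) mod a) {0..<a}"
  proof (rule inj_onI)
    fix i j assume i: "i \<in> {0..<a}" and j: "j \<in> {0..<a}" and e: "(i*d) mod a = (j*d) mod a"
    have "a dvd (i - j)" using dvd_cancel_coprime[OF g e] .
    then have "i mod a = j mod a" by (simp add: mod_eq_dvd_iff)
    then show "i = j" using i j by simp
  qed
  have "(\<lambda>j. (j*d) mod a) ` {0..<a} \<subseteq> {0..<a}" using a by auto
  then have "(\<lambda>j. (j*d) mod a) ` {0..<a} = {0..<a}" using endo_inj_surj[OF _ _ inj] by simp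
  then show ?thesis using inj by (simp add: bij_betw_def)
qed

definition G :: "int \<Rightarrow> int \<Rightarrow> int \<Rightarrow> int \<Rightarrow> int set" where
  "G a d s j = {n. 0 < n \<and> n < ww a d s j \<and> n mod a = (j*d) mod a}"

lemma NR_union:
  fixes a d s :: int
  assumes a: "a > 0" and s: "1 \<le> s" and g: "gcd a d = 1" and dd: "d \<ge> 1"
  shows "NR a d s = (\<Union>j\<in>{0..<a}. G a d s j)"
proof (intro equalityI subsetI)
  fix n assume "n \<in> NR a d s"
  then have n0: "0 < n" and nr: "\<not> (\<exists>k j. 0 \<le> j \<and> j \<le> k*s \<and> n = k*a + j*d)"
    unfolding NR_def using rep_iff[OF s, of n a d] by auto
  have im: "(\<lambda>j. (j*d) mod a) ` {0..<a} = {0..<a}" using bij_betw_imp_surj_on[OF bij_mod[OF a g]] .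
  have "n mod a \<in> {0..<a}" using a by simp
  then have "n mod a \<in> (\<lambda>j. (j*d) mod a) ` {0..<a}" unfolding im .
  then obtain j0 where j0: "j0 \<in> {0..<a}" "n mod a = (j0*d) mod a" by auto
  then have "n < ww a d s j0" using char[OF a s g dd, of j0 n] nr by auto
  then show "n \<in> (\<Union>j\<in>{0..<a}. G a d s j)" using j0 n0 unfolding G_def by auto
next
  fix n assume "n \<in> (\<Union>j\<in>{0..<a}. G a d s j)"
  then obtain j0 where j0: "j0 \<in> {0..<a}" and "n \<in> G a d s j0" by auto
  then have n0: "0 < n" and lt: "n < ww a d s j0" and nm: "n mod a = (j0*d) mod a" unfolding G_def by auto
  have "\<not> (\<exists>k j. 0 \<le> j \<and> j \<le> k*s \<and> n = k*a + j*d)" using char[OF a s g dd, of j0 n] j0 nm lt by auto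
  then show "n \<in> NR a d s" unfolding NR_def using rep_iff[OF s, of n a d] n0 by auto
qed

lemma G_disj:
  fixes a d s :: int
  assumes a: "a > 0" and g: "gcd a d = 1" and i: "i \<in> {0..<a}" and j: "j \<in> {0..<a}" and ne: "i \<noteq> j"
  shows "G a d s i \<inter> G a d s j = {}"
proof -
  have inj: "inj_on (\<lambda>j. (j*d) mod a) {0..<a}" using bij_betw_imp_inj_on[OF bij_mod[OF a g]] .
  have "(i*d) mod a \<noteq> (j*d) mod a"
  proof
    assume "(i*d) mod a = (j*d) mod a"
    then have "i = j" using inj_onD[OF inj _ i j] by simp
    then show False using ne by simp
  qed
  then show ?thesis unfolding G_def by auto
qed

lemma telesc:
  fixes g F :: "nat \<Rightarrow> int"
  assumes "\<And>u. F (Suc u) = F u + g u"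
  shows "(\<Sum>u\<in>{0..<q}. g u) = F q - F 0"
  by (induction q) (simp_all add: assms)

lemma G_image:
  fixes a r w :: int
  assumes a: "a > 0" and r: "0 < r" "r < a" and w: "w mod a = r"
  shows "{n. 0 < n \<and> n < w \<and> n mod a = r} = (\<lambda>u. r + int u * a) ` {0..<nat (w div a)}"
proof (intro equalityI subsetI)
  fix n assume "n \<in> {n. 0 < n \<and> n < w \<and> n mod a = r}"
  then have n: "0 < n" "n < w" "n mod a = r" by auto
  have e1: "n = r + (n div a) * a" using n(3) div_mult_mod_eq[of n a] by linarith
  have e2: "w = r + (w div a) * a" using w div_mult_mod_eq[of w a] by linarith
  have "0 \<le> n div a" using n a by (simp add: pos_imp_zdiv_nonneg_iff)
  moreover have "(n div a) * a < (w div a) * a" using e1 e2 n(2) by linarith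
  then have "n div a < w div a" using a by (simp add: mult_less_cancel_right)
  ultimately show "n \<in> (\<lambda>u. r + int u * a) ` {0..<nat (w div a)}" using e1
    by (intro image_eqI[of _ _ "nat (n div a)"]) auto
next
  fix n assume "n \<in> (\<lambda>u. r + int u * a) ` {0..<nat (w div a)}"
  then obtain u where u: "u < nat (w div a)" and n: "n = r + int u * a" by auto
  have e2: "w = r + (w div a) * a" using w div_mult_mod_eq[of w a] by linarith
  have "int u * a < (w div a) * a" using u a by (simp add: mult_less_cancel_right)
  then have "n < w" using n e2 by linarith
  moreover have "0 \<le> int u * a" using a by simp
  then have "0 < n" using n r by linarith
  moreover have "n mod a = r" using n r by simp
  ultimately show "n \<in> {n. 0 < n \<and> n < w \<and> n mod a = r}" by simp
qed

lemma G_sums: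
  fixes a r w :: int
  assumes a: "a > 0" and r: "0 < r" "r < a" and w: "w mod a = r" and w0: "0 \<le> w"
  defines "T \<equiv> {n. 0 < n \<and> n < w \<and> n mod a = r}"
  shows "a * (\<Sum>n\<in>T. n^0) = w - r"
    and "2 * a * (\<Sum>n\<in>T. n^1) = f1 a w - f1 a r"
    and "6 * a * (\<Sum>n\<in>T. n^2) = f2 a w - f2 a r"
proof -
  define q where "q = nat (w div a)"
  have "0 \<le> w div a" using w0 a by (simp add: pos_imp_zdiv_nonneg_iff)
  then have iq: "int q = w div a" unfolding q_def by simp
  have e2: "w = r + int q * a" unfolding iq using w div_mult_mod_eq[of w a] by linarith
  have inj: "inj_on (\<lambda>u. r + int u * a) {0..<q}" using a by (auto simp: inj_on_def)
  have TT: "T = (\<lambda>u. r + int u * a) ` {0..<q}" unfolding T_def q_def using G_image[OF a r w] .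
  have S: "(\<Sum>n\<in>T. g n) = (\<Sum>u\<in>{0..<q}. g (r + int u * a))" for g :: "int \<Rightarrow> int"
    unfolding TT using sum.reindex[OF inj] by simp
  show "a * (\<Sum>n\<in>T. n^0) = w - r" unfolding S e2 by simp
  have "(\<Sum>u\<in>{0..<q}. 2 * a * (r + int u * a)^1) = f1 a (r + int q * a) - f1 a (r + int 0 * a)"
    by (rule telesc[where F = "\<lambda>q. f1 a (r + int q * a)"]) (simp add: f1_def algebra_simps)
  then show "2 * a * (\<Sum>n\<in>T. n^1) = f1 a w - f1 a r" unfolding S e2 by (simp add: sum_distrib_left)
  have "(\<Sum>u\<in>{0..<q}. 6 * a * (r + int u * a)^2) = f2 a (r + int q * a) - f2 a (r + int 0 * a)"
    by (rule telesc[where F = "\<lambda>q. f2 a (r + int q * a)"]) (simp add: f2_def algebra_simps power2_eq_square)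
  then show "6 * a * (\<Sum>n\<in>T. n^2) = f2 a w - f2 a r" unfolding S e2 by (simp add: sum_distrib_left)
qed




lemma Gj:
  fixes a d s j :: int
  assumes a: "a > 0" and s: "1 \<le> s" and g: "gcd a d = 1" and dd: "d \<ge> 1" and j: "j \<in> {0..<a}"
  shows "a * (\<Sum>n\<in>G a d s j. n^0) = ww a d s j - (j*d) mod a
    \<and> 2 * a * (\<Sum>n\<in>G a d s j. n^1) = f1 a (ww a d s j) - f1 a ((j*d) mod a)
    \<and> 6 * a * (\<Sum>n\<in>G a d s j. n^2) = f2 a (ww a d s j) - f2 a ((j*d) mod a)"
proof (cases "j = 0")
  case True
  have K0: "Kc s 0 = 0" using Kc_unique[of s 0 0] s by simp
  have w0: "ww a d s 0 = 0" unfolding ww_def K0 by simp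
  have "G a d s 0 = {}" unfolding G_def w0 by auto
  then show ?thesis using True w0 by (simp add: f1_def f2_def)
next
  case False
  have Kn: "0 \<le> Kc s j"
  proof -
    have "j \<le> s * Kc s j" using Kc_bounds[of s j] s by simp
    then have "0 \<le> s * Kc s j" using j by simp
    show ?thesis
    proof (rule ccontr)
      assume "\<not> 0 \<le> Kc s j"
      then have "s * Kc s j < 0" using s by (simp add: mult_pos_neg)
      then show False using \<open>0 \<le> s * Kc s j\<close> by simp
    qed
  qed
  have inj: "inj_on (\<lambda>j. (j*d) mod a) {0..<a}" using bij_betw_imp_inj_on[OF bij_mod[OF a g]] .
  have "(j*d) mod a \<noteq> (0*d) mod a"
  proof
    assume "(j*d) mod a = (0*d) mod a"
    moreover have "(0::int) \<in> {0..<a}" using a by simp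
    ultimately have "j = 0" using inj_onD[OF inj _ j] by blast
    then show False using False by simp
  qed
  moreover have "0 \<le> (j*d) mod a" "(j*d) mod a < a" using a by simp_all
  ultimately have r: "0 < (j*d) mod a" "(j*d) mod a < a" by simp_all
  have w: "ww a d s j mod a = (j*d) mod a" unfolding ww_def by simp
  have "0 \<le> Kc s j * a" using Kn a by simp
  moreover have "0 \<le> j * d" using j dd by simp
  ultimately have w0: "0 \<le> ww a d s j" unfolding ww_def by simp
  have GG: "G a d s j = {n. 0 < n \<and> n < ww a d s j \<and> n mod a = (j*d) mod a}" unfolding G_def ..
  show ?thesis unfolding GG using G_sums[OF a r w w0] by simp
qed

lemma c_bounds:
  fixes a s c :: int
  assumes s: "1 \<le> s" and c: "c = \<lceil>real_of_int (a - 1) / real_of_int s\<rceil>"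
  shows "s * (c - 1) < a - 1 \<and> a - 1 \<le> s * c"
proof -
  have sp: "0 < real_of_int s" using s by simp
  have h: "real_of_int c - 1 < real_of_int (a - 1) / real_of_int s \<and> real_of_int (a - 1) / real_of_int s \<le> real_of_int c"
    unfolding c by (rule ceiling_correct)
  then have "(real_of_int c - 1) * real_of_int s < real_of_int (a - 1)" using sp by (simp add: pos_less_divide_eq)
  then have "real_of_int (s * (c - 1)) < real_of_int (a - 1)" by (simp add: algebra_simps)
  then have 1: "s * (c - 1) < a - 1" by (simp only: of_int_less_iff)
  have "real_of_int (a - 1) \<le> real_of_int c * real_of_int s" using h sp by (simp add: pos_divide_le_eq)
  then have "real_of_int (a - 1) \<le> real_of_int (s * c)" by (simp add: algebra_simps)
  then have 2: "a - 1 \<le> s * c" by (simp only: of_int_le_iff)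
  show ?thesis using 1 2 by simp
qed

lemma Spow_split:
  fixes a d s :: int
  assumes a: "a > 0" and s: "1 \<le> s" and g: "gcd a d = 1" and dd: "d \<ge> 1"
  shows "Spow a d s m = (\<Sum>j\<in>{0..<a}. (\<Sum>n\<in>G a d s j. n^m))"
proof -
  have fin: "\<forall>j\<in>{0..<a}. finite (G a d s j)"
  proof
    fix j show "finite (G a d s j)"
      by (rule finite_subset[of _ "{0<..<ww a d s j}"]) (auto simp: G_def)
  qed
  have dis: "\<forall>i\<in>{0..<a}. \<forall>j\<in>{0..<a}. i \<noteq> j \<longrightarrow> G a d s i \<inter> G a d s j = {}"
    using G_disj[OF a g] by blast
  show ?thesis unfolding Spow_def NR_union[OF a s g dd]
    using sum.UNION_disjoint[OF _ fin dis, of "\<lambda>n. n^m"] by simp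
qed

theorem mainTheorem6:
  fixes a d s c :: int
  assumes "a \<ge> 2" and "d \<ge> 1" and "gcd a d = 1" and "1 \<le> s" and "s < a"
    and "c = \<lceil>real_of_int (a - 1) / real_of_int s\<rceil>"
  shows "2 * Spow a d s 0 = - s * c^2 + (2*a - 2 + s) * c + (a - 1) * (d - 1) \<and>
         12 * Spow a d s 1 = - 2 * s * (2*a + d*s) * c^3
           + (6 * a^2 + 3 * (2*a + d*s) * (s - 1)) * c^2
           + (6 * (d - 1) * a * (a - 1) + (3*d - 2*a - d*s) * s) * c
           + (a - 1) * (d - 1) * (2*a*d - a - d - 1) \<and>
         12 * Spow a d s 2 = - s * ((a + s*d) * (2*a + s*d) + a^2) * c^4
           + (4 * a^3 + 2 * (3*s - 2) * a^2 + 2 * s * d * (3*s - 2) * a + 2 * s^2 * d^2 * (s - 1)) * c^3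
           + (6 * (d - 1) * a^3 + 3 * (2 - s - 2*d) * a^2 - 3 * s * d * (s - 2) * a
              - s * d^2 * (s^2 - 3*s + 1)) * c^2
           + (2 * (2*d - 1) * (d - 1) * a^3 - (6 * d^2 - 6*d + 2) * a^2 + 2 * d * (d - s) * a
              + s * (1 - s) * d^2) * c
           + a * d * (a - 1) * (d - 1) * (a*d - a - d)"
proof -
  have a: "a > 0" using assms by simp
  have s: "1 \<le> s" "0 < s" using assms by auto
  have g: "gcd a d = 1" and dd: "d \<ge> 1" using assms by auto
  have cb: "s * (c - 1) < a - 1" "a - 1 \<le> s * c" using c_bounds[OF s(1) assms(6)] by auto
  have N0: "0 \<le> a - 1" using a by simp
  have ivl: "{0..<a} = {0..a-1}" by auto
  have bij: "bij_betw (\<lambda>j. (j*d) mod a) {0..<a} {0..<a}" using bij_mod[OF a g] .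
  have GJ: "\<And>j. j \<in> {0..<a} \<Longrightarrow> a * (\<Sum>n\<in>G a d s j. n^0) = ww a d s j - (j*d) mod a
    \<and> 2 * a * (\<Sum>n\<in>G a d s j. n^1) = f1 a (ww a d s j) - f1 a ((j*d) mod a)
    \<and> 6 * a * (\<Sum>n\<in>G a d s j. n^2) = f2 a (ww a d s j) - f2 a ((j*d) mod a)"
    using Gj[OF a s(1) g dd] by blast
  have WW: "(\<Sum>j\<in>{0..<a}. h (ww a d s j)) = (\<Sum>j\<in>{0..a-1}. h (Kc s j * a + j * d))" for h :: "int \<Rightarrow> int"
    unfolding ivl ww_def ..
  have RR: "(\<Sum>j\<in>{0..<a}. h ((j*d) mod a)) = (\<Sum>x\<in>{0..<a}. h x)" for h :: "int \<Rightarrow> int"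
    using sum.reindex_bij_betw[OF bij, of h] .
  have E0: "2 * a * Spow a d s 0 = W0 a d s (a-1) c - R0 a a"
  proof -
    have "a * Spow a d s 0 = (\<Sum>j\<in>{0..<a}. a * (\<Sum>n\<in>G a d s j. n^0))"
      unfolding Spow_split[OF a s(1) g dd] by (simp add: sum_distrib_left)
    also have "\<dots> = (\<Sum>j\<in>{0..<a}. ww a d s j - (j*d) mod a)" using GJ by (intro sum.cong) auto
    also have "\<dots> = (\<Sum>j\<in>{0..<a}. ww a d s j) - (\<Sum>j\<in>{0..<a}. (j*d) mod a)" by (simp add: sum_subtractf)
    also have "\<dots> = (\<Sum>j\<in>{0..a-1}. Kc s j * a + j * d) - (\<Sum>x\<in>{0..<a}. x)"
      using WW[of "\<lambda>x. x"] RR[of "\<lambda>x. x"] by simp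
    finally have "2 * (a * Spow a d s 0) = 2 * (\<Sum>j\<in>{0..a-1}. Kc s j * a + j * d) - 2 * (\<Sum>x\<in>{0..<a}. x)" by simp
    then show ?thesis using sumW0[OF s(2) N0 cb] sumR0[of a a] a by simp
  qed
  have E1: "12 * a * Spow a d s 1 = W1 a d s (a-1) c - R1 a a"
  proof -
    have "2 * a * Spow a d s 1 = (\<Sum>j\<in>{0..<a}. 2 * a * (\<Sum>n\<in>G a d s j. n^1))"
      unfolding Spow_split[OF a s(1) g dd] by (simp add: sum_distrib_left)
    also have "\<dots> = (\<Sum>j\<in>{0..<a}. f1 a (ww a d s j) - f1 a ((j*d) mod a))" using GJ by (intro sum.cong) auto
    also have "\<dots> = (\<Sum>j\<in>{0..<a}. f1 a (ww a d s j)) - (\<Sum>j\<in>{0..<a}. f1 a ((j*d) mod a))" by (simp add: sum_subtractf)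
    also have "\<dots> = (\<Sum>j\<in>{0..a-1}. f1 a (Kc s j * a + j * d)) - (\<Sum>x\<in>{0..<a}. f1 a x)"
      using WW[of "f1 a"] RR[of "f1 a"] by simp
    finally have "6 * (2 * a * Spow a d s 1) = 6 * (\<Sum>j\<in>{0..a-1}. f1 a (Kc s j * a + j * d)) - 6 * (\<Sum>x\<in>{0..<a}. f1 a x)" by simp
    then show ?thesis using sumW1[OF s(2) N0 cb] sumR1[of a a] a by simp
  qed
  have E2: "12 * a * Spow a d s 2 = W2 a d s (a-1) c - R2 a a"
  proof -
    have "6 * a * Spow a d s 2 = (\<Sum>j\<in>{0..<a}. 6 * a * (\<Sum>n\<in>G a d s j. n^2))"
      unfolding Spow_split[OF a s(1) g dd] by (simp add: sum_distrib_left)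
    also have "\<dots> = (\<Sum>j\<in>{0..<a}. f2 a (ww a d s j) - f2 a ((j*d) mod a))" using GJ by (intro sum.cong) auto
    also have "\<dots> = (\<Sum>j\<in>{0..<a}. f2 a (ww a d s j)) - (\<Sum>j\<in>{0..<a}. f2 a ((j*d) mod a))" by (simp add: sum_subtractf)
    also have "\<dots> = (\<Sum>j\<in>{0..a-1}. f2 a (Kc s j * a + j * d)) - (\<Sum>x\<in>{0..<a}. f2 a x)"
      using WW[of "f2 a"] RR[of "f2 a"] by simp
    finally have "2 * (6 * a * Spow a d s 2) = 2 * (\<Sum>j\<in>{0..a-1}. f2 a (Kc s j * a + j * d)) - 2 * (\<Sum>x\<in>{0..<a}. f2 a x)" by simp
    then show ?thesis using sumW2[OF s(2) N0 cb] sumR2[of a a] a by simp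
  qed
  have P0: "W0 a d s (a-1) c - R0 a a = a * (- s * c^2 + (2*a - 2 + s) * c + (a - 1) * (d - 1))"
    unfolding W0_def R0_def by (simp add: algebra_simps power2_eq_square)
  have P1: "W1 a d s (a-1) c - R1 a a = a * (- 2 * s * (2*a + d*s) * c^3
           + (6 * a^2 + 3 * (2*a + d*s) * (s - 1)) * c^2
           + (6 * (d - 1) * a * (a - 1) + (3*d - 2*a - d*s) * s) * c
           + (a - 1) * (d - 1) * (2*a*d - a - d - 1))"
    unfolding W1_def R1_def by (simp add: algebra_simps power2_eq_square power3_eq_cube)
  have P2: "W2 a d s (a-1) c - R2 a a = a * (- s * ((a + s*d) * (2*a + s*d) + a^2) * c^4
           + (4 * a^3 + 2 * (3*s - 2) * a^2 + 2 * s * d * (3*s - 2) * a + 2 * s^2 * d^2 * (s - 1)) * c^3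
           + (6 * (d - 1) * a^3 + 3 * (2 - s - 2*d) * a^2 - 3 * s * d * (s - 2) * a
              - s * d^2 * (s^2 - 3*s + 1)) * c^2
           + (2 * (2*d - 1) * (d - 1) * a^3 - (6 * d^2 - 6*d + 2) * a^2 + 2 * d * (d - s) * a
              + s * (1 - s) * d^2) * c
           + a * d * (a - 1) * (d - 1) * (a*d - a - d))"
    unfolding W2_def R2_def by (simp add: algebra_simps power2_eq_square power3_eq_cube power4_eq_xxxx)
  have an: "a \<noteq> 0" using a by simp
  have "a * (2 * Spow a d s 0) = a * (- s * c^2 + (2*a - 2 + s) * c + (a - 1) * (d - 1))"
    using E0 P0 by (simp add: algebra_simps)
  then have R0': "2 * Spow a d s 0 = - s * c^2 + (2*a - 2 + s) * c + (a - 1) * (d - 1)" using an by simp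
  have "a * (12 * Spow a d s 1) = a * (- 2 * s * (2*a + d*s) * c^3
           + (6 * a^2 + 3 * (2*a + d*s) * (s - 1)) * c^2
           + (6 * (d - 1) * a * (a - 1) + (3*d - 2*a - d*s) * s) * c
           + (a - 1) * (d - 1) * (2*a*d - a - d - 1))"
    using E1 P1 by (simp only: mult.assoc mult.left_commute[of a 12])
  then have R1': "12 * Spow a d s 1 = - 2 * s * (2*a + d*s) * c^3
           + (6 * a^2 + 3 * (2*a + d*s) * (s - 1)) * c^2
           + (6 * (d - 1) * a * (a - 1) + (3*d - 2*a - d*s) * s) * c
           + (a - 1) * (d - 1) * (2*a*d - a - d - 1)" using mult_left_cancel[OF an] by blast
  have "a * (12 * Spow a d s 2) = a * (- s * ((a + s*d) * (2*a + s*d) + a^2) * c^4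
           + (4 * a^3 + 2 * (3*s - 2) * a^2 + 2 * s * d * (3*s - 2) * a + 2 * s^2 * d^2 * (s - 1)) * c^3
           + (6 * (d - 1) * a^3 + 3 * (2 - s - 2*d) * a^2 - 3 * s * d * (s - 2) * a
              - s * d^2 * (s^2 - 3*s + 1)) * c^2
           + (2 * (2*d - 1) * (d - 1) * a^3 - (6 * d^2 - 6*d + 2) * a^2 + 2 * d * (d - s) * a
              + s * (1 - s) * d^2) * c
           + a * d * (a - 1) * (d - 1) * (a*d - a - d))"
    using E2 P2 by (simp only: mult.assoc mult.left_commute[of a 12])
  then have R2': "12 * Spow a d s 2 = - s * ((a + s*d) * (2*a + s*d) + a^2) * c^4
           + (4 * a^3 + 2 * (3*s - 2) * a^2 + 2 * s * d * (3*s - 2) * a + 2 * s^2 * d^2 * (s - 1)) * c^3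
           + (6 * (d - 1) * a^3 + 3 * (2 - s - 2*d) * a^2 - 3 * s * d * (s - 2) * a
              - s * d^2 * (s^2 - 3*s + 1)) * c^2
           + (2 * (2*d - 1) * (d - 1) * a^3 - (6 * d^2 - 6*d + 2) * a^2 + 2 * d * (d - s) * a
              + s * (1 - s) * d^2) * c
           + a * d * (a - 1) * (d - 1) * (a*d - a - d)" using mult_left_cancel[OF an] by blast
  show ?thesis using R0' R1' R2' by blast
qed


end
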